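(* Let $(k_i)_{i\in\mathbb N}\subset\mathbb N$ satisfy $k_{2i}>1$ for infinitely many $i$ and $k_{2i-1}>1$ for infinitely many $i$, and let $\xi\in(0,1)$. If $\vec\xi=(\xi,\xi,\xi)$ does not belong to $W^s(\vec0)+\mathbb Z^3$, then $e^{2\pi i\xi}$ is not a continuous eigenvalue of the corresponding interval translation map (equivalently of its subshift $(X,\sigma)$).
   Context: For $0<\beta\le\alpha\le 1$ let $T_{\alpha,\beta}(x)=x+\alpha$ on $[0,1-\alpha)$, $x+\beta$ on $[1-\alpha,1-\beta)$, $x-1+\beta$ on $[1-\beta,1]$. With $U=\{0<\beta\le\alpha\le1\}$ and $G(\alpha,\beta)=(\beta/\alpha,(\beta-1)/\alpha+\lfloor1/\alpha\rfloor)$, the map is of infinite type if $G^n(\alpha,\beta)\in U^\circ$ for all $n\ge 0$; infinite type maps correspond bijectively to coding sequences $k_i=\lfloor1/\alpha_i\rfloor$, $(\alpha_i,\beta_i)=G^{i-1}(\alpha,\beta)$, which are exactly the sequences in the claim. For $k\in\mathbb N$ let $\chi_k$ be the substitution $1\mapsto2$, $2\mapsto31^k$, $3\mapsto31^{k-1}$, let $\rho=\lim_i\chi_{k_1}\circ\cdots\circ\chi_{k_i}(3)$ and $X$ the closure of the shift orbit of $\rho$; $(X,\sigma)$ is isomorphic to $T_{\alpha,\beta}$ on its Cantor attractor. Let $A_k=\begin{pmatrix}0&k&k-1\\1&0&0\\0&1&1\end{pmatrix}$ act on row vectors, $Q^-=\{x:x_1,x_2\ge0\ge x_3\}$, and let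 $W^s(\vec0)$ be the linear span of $\bigcap_{n\ge1}\{\vec x : \vec xA_{k_1}\cdots A_{k_n}\in Q^-\}$. A continuous eigenvalue $e^{2\pi i\xi}$ means there is a nonzero continuous $f:X\to\mathbb C$ with $f\circ\sigma=e^{2\pi i\xi}f$. *)

theory Defs
  imports "HOL-Analysis.Analysis"
begin

text \<open>Letters of the alphabet are the naturals 1, 2, 3. Coding sequences k are indexed from 1
  (the value k 0 is irrelevant).\<close>

fun chi :: "nat \<Rightarrow> nat \<Rightarrow> nat list" where
  "chi k a = (if a = 1 then [2]
              else if a = 2 then 3 # replicate k 1
              else if a = 3 then 3 # replicate (k - 1) 1
              else [])"

definition subst_word :: "nat \<Rightarrow> nat list \<Rightarrow> nat list" where
  "subst_word k w = concat (map (chi k) w)"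

fun comp_subst :: "(nat \<Rightarrow> nat) \<Rightarrow> nat \<Rightarrow> nat list \<Rightarrow> nat list" where
  "comp_subst k 0 w = w"
| "comp_subst k (Suc n) w = comp_subst k n (subst_word (k (Suc n)) w)"

text \<open>The limit word rho = lim_n chi_{k 1} o ... o chi_{k n} (3): its i-th letter is read off
  from the first approximant long enough (the approximants are successive prefixes).\<close>
definition rho :: "(nat \<Rightarrow> nat) \<Rightarrow> nat \<Rightarrow> nat" where
  "rho k i = comp_subst k (LEAST n. i < length (comp_subst k n [3])) [3] ! i"

definition shift :: "(nat \<Rightarrow> nat) \<Rightarrow> nat \<Rightarrow> nat" where
  "shift x = (\<lambda>i. x (Suc i))"

definition subshiftX :: "(nat \<Rightarrow> nat) \<Rightarrow> (nat \<Rightarrow> nat) set" where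
  "subshiftX k = closure (range (\<lambda>n. (shift ^^ n) (rho k)))"

definition continuous_eigenvalue ::
  "(nat \<Rightarrow> nat) set \<Rightarrow> ((nat \<Rightarrow> nat) \<Rightarrow> (nat \<Rightarrow> nat)) \<Rightarrow> complex \<Rightarrow> bool" where
  "continuous_eigenvalue X T c \<longleftrightarrow>
     (\<exists>f :: (nat \<Rightarrow> nat) \<Rightarrow> complex. continuous_on X f \<and> (\<exists>x\<in>X. f x \<noteq> 0) \<and>
        (\<forall>x\<in>X. f (T x) = c * f x))"

text \<open>The matrix A_k (acting on row vectors).\<close>
definition Amat :: "nat \<Rightarrow> real^3^3" where
  "Amat k = vector [vector [0, real k, real k - 1], vector [1, 0, 0], vector [0, 1, 1]]"

fun prodA :: "(nat \<Rightarrow> nat) \<Rightarrow> nat \<Rightarrow> real^3^3" where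
  "prodA k 0 = mat 1"
| "prodA k (Suc n) = prodA k n ** Amat (k (Suc n))"

definition Qminus :: "(real^3) set" where
  "Qminus = {x. x$1 \<ge> 0 \<and> x$2 \<ge> 0 \<and> x$3 \<le> 0}"

definition Ws :: "(nat \<Rightarrow> nat) \<Rightarrow> (real^3) set" where
  "Ws k = span (\<Inter>n\<in>{1..}. {x. x v* prodA k n \<in> Qminus})"

end

theory Submission
  imports Defs
begin

lemma subst_word_append[simp]: "subst_word k (u @ v) = subst_word k u @ subst_word k v"
  by (simp add: subst_word_def)
lemma subst_word_Nil[simp]: "subst_word k [] = []"
  by (simp add: subst_word_def)
lemma subst_word_Cons[simp]: "subst_word k (a # v) = chi k a @ subst_word k v"
  by (simp add: subst_word_def)
declare chi.simps[simp del]
lemma chi1[simp]: "chi k 1 = [2]" "chi k (Suc 0) = [2]" by (simp_all add: chi.simps)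
lemma chi2[simp]: "chi k 2 = 3 # replicate k 1" by (simp add: chi.simps)
lemma chi3[simp]: "chi k 3 = 3 # replicate (k - 1) 1" by (simp add: chi.simps)

lemma comp_subst_append: "comp_subst k n (u @ v) = comp_subst k n u @ comp_subst k n v"
  by (induction n arbitrary: u v) auto

lemma comp_subst_Nil[simp]: "comp_subst k n [] = []"
  by (induction n) auto

lemma comp_subst_Cons: "comp_subst k n (a # v) = comp_subst k n [a] @ comp_subst k n v"
  using comp_subst_append[of k n "[a]" v] by simp

lemma comp_subst_replicate: "comp_subst k n (replicate r a) = concat (replicate r (comp_subst k n [a]))"
proof (induction r)
  case (Suc r)
  have "comp_subst k n (replicate (Suc r) a) = comp_subst k n ([a] @ replicate r a)" by simp
  also have "\<dots> = comp_subst k n [a] @ comp_subst k n (replicate r a)" by (rule comp_subst_append)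
  finally show ?case using Suc by simp
qed simp

lemma chi_set: "set (chi k a) \<subseteq> {1,2,3}"
  by (auto simp: chi.simps)

lemma subst_word_set: "set (subst_word k w) \<subseteq> {1,2,3}"
  using chi_set by (auto simp: subst_word_def)

lemma comp_subst_set: "set w \<subseteq> {1,2,3} \<Longrightarrow> set (comp_subst k n w) \<subseteq> {1,2,3}"
proof (induction n arbitrary: w)
  case (Suc n)
  show ?case using Suc.IH[OF subst_word_set[of "k (Suc n)" w]] by simp
qed simp

lemma chi_ne: "a \<in> {1,2,3} \<Longrightarrow> chi k a \<noteq> []"
  by (auto simp: chi.simps)

lemma subst_word_len: "set w \<subseteq> {1,2,3} \<Longrightarrow> length (subst_word k w) \<ge> length w"
proof (induction w)
  case (Cons a w)
  then have "length (chi k a) \<ge> 1" using chi_ne[of a k] by (cases "chi k a") auto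
  with Cons show ?case by auto
qed simp

lemma comp_subst_len: "set w \<subseteq> {1,2,3} \<Longrightarrow> length (comp_subst k n w) \<ge> length w"
proof (induction n arbitrary: w)
  case (Suc n)
  have "length (comp_subst k (Suc n) w) = length (comp_subst k n (subst_word (k (Suc n)) w))" by simp
  also have "\<dots> \<ge> length (subst_word (k (Suc n)) w)" using Suc.IH subst_word_set by blast
  finally show ?case using subst_word_len[OF Suc.prems, of "k (Suc n)"] by linarith
qed simp

lemma comp_subst_hd3: "\<exists>r. comp_subst k n (3 # w) = 3 # r"
  by (induction n arbitrary: w) auto

lemma comp_subst_split1:
  "comp_subst k (Suc N) w = subst_word (k 1) (comp_subst (\<lambda>i. k (Suc i)) N w)"
  by (induction N arbitrary: w) auto

definition lv :: "(nat \<Rightarrow> nat) \<Rightarrow> nat \<Rightarrow> nat list \<Rightarrow> bool" where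
  "lv k m u \<longleftrightarrow> (\<exists>N p s. comp_subst (\<lambda>i. k (i + m)) N [3] = p @ u @ s)"

lemma lv_set: "lv k m u \<Longrightarrow> set u \<subseteq> {1,2,3}"
proof -
  assume "lv k m u"
  then obtain N p s where e: "comp_subst (\<lambda>i. k (i + m)) N [3] = p @ u @ s" by (auto simp: lv_def)
  have "set (comp_subst (\<lambda>i. k (i + m)) N [3]) \<subseteq> {1,2,3}" by (rule comp_subst_set) simp
  then show ?thesis unfolding e by simp
qed

lemma lv_sub: "lv k m (p @ u @ s) \<Longrightarrow> lv k m u"
  unfolding lv_def by (metis append.assoc)

lemma lv_down: "lv k (Suc m) u \<Longrightarrow> lv k m (subst_word (k (Suc m)) u)"
proof -
  assume "lv k (Suc m) u"
  then obtain N p s where e: "comp_subst (\<lambda>i. k (i + Suc m)) N [3] = p @ u @ s" by (auto simp: lv_def)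
  have "comp_subst (\<lambda>i. k (i + m)) (Suc N) [3] = subst_word (k (Suc m)) (comp_subst (\<lambda>i. k (Suc i + m)) N [3])"
    by (simp only: comp_subst_split1) simp
  also have "(\<lambda>i. k (Suc i + m)) = (\<lambda>i. k (i + Suc m))" by simp
  finally show ?thesis unfolding lv_def using e by (metis subst_word_append)
qed

lemma lv_top: "lv k m u \<Longrightarrow> lv k 0 (comp_subst k m u)"
proof (induction m arbitrary: u)
  case (Suc m)
  then show ?case using lv_down[OF Suc.prems] by simp
qed simp

lemma comp3_Suc: "comp_subst k (Suc n) [3] = comp_subst k n [3] @ comp_subst k n (replicate (k (Suc n) - 1) 1)"
proof -
  have "comp_subst k (Suc n) [3] = comp_subst k n (3 # replicate (k (Suc n) - 1) 1)" by simp
  also have "\<dots> = comp_subst k n [3] @ comp_subst k n (replicate (k (Suc n) - 1) 1)" by (rule comp_subst_Cons)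
  finally show ?thesis .
qed

lemma comp3_prefix: "\<exists>r. comp_subst k (Suc n) [3] = comp_subst k n [3] @ r"
  using comp3_Suc by blast

lemma comp3_prefix_le: "n \<le> N \<Longrightarrow> \<exists>r. comp_subst k N [3] = comp_subst k n [3] @ r"
proof (induction N rule: dec_induct)
  case (step N)
  then show ?case using comp3_prefix[of k N] by (metis append.assoc)
qed simp

lemma len3_mono: "n \<le> N \<Longrightarrow> length (comp_subst k n [3]) \<le> length (comp_subst k N [3])"
  using comp3_prefix_le[of n N k] by auto

lemma len3_grow: "k (Suc n) \<ge> 2 \<Longrightarrow> length (comp_subst k (Suc n) [3]) \<ge> Suc (length (comp_subst k n [3]))"
proof -
  assume a: "k (Suc n) \<ge> 2"
  note comp3_Suc[of k n]
  moreover have "length (comp_subst k n (replicate (k (Suc n) - 1) 1)) \<ge> length (replicate (k (Suc n) - 1) (1::nat))"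
    by (rule comp_subst_len) auto
  ultimately show ?thesis using a by simp
qed

lemma len3_unbounded: assumes "\<forall>n. \<exists>p>n. k p \<ge> 2" shows "\<exists>n. length (comp_subst k n [3]) \<ge> L"
proof (induction L)
  case (Suc L)
  then obtain n where n: "length (comp_subst k n [3]) \<ge> L" by blast
  obtain p where p: "p > n" "k p \<ge> 2" using assms by blast
  then obtain q where q: "p = Suc q" "n \<le> q" by (cases p) auto
  have "length (comp_subst k p [3]) \<ge> Suc (length (comp_subst k q [3]))"
    using len3_grow[of k q] p q by simp
  moreover have "length (comp_subst k q [3]) \<ge> length (comp_subst k n [3])" using len3_mono q by blast
  ultimately show ?case using n by (intro exI[of _ p]) linarith
qed simp

lemma rho_eq: assumes "i < length (comp_subst k N [3])" shows "rho k i = comp_subst k N [3] ! i"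
proof -
  define n0 where "n0 = (LEAST n. i < length (comp_subst k n [3]))"
  have h0: "i < length (comp_subst k n0 [3])" unfolding n0_def by (rule LeastI) (rule assms)
  have "n0 \<le> N" unfolding n0_def by (rule Least_le) (rule assms)
  then obtain r where "comp_subst k N [3] = comp_subst k n0 [3] @ r" using comp3_prefix_le by blast
  then have "comp_subst k N [3] ! i = comp_subst k n0 [3] ! i" using h0 by (simp add: nth_append)
  then show ?thesis unfolding rho_def n0_def[symmetric] by simp
qed

lemma rho_range: assumes "\<forall>n. \<exists>p>n. k p \<ge> 2" shows "rho k i \<in> {1,2,3}"
proof -
  obtain N where N: "length (comp_subst k N [3]) \<ge> Suc i" using len3_unbounded[OF assms] by blast
  then have "rho k i = comp_subst k N [3] ! i" by (intro rho_eq) simp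
  moreover have m: "comp_subst k N [3] ! i \<in> set (comp_subst k N [3])" using N by simp
  moreover have c: "set (comp_subst k N [3]) \<subseteq> {1,2,3}" by (rule comp_subst_set) simp
  ultimately show ?thesis using subsetD[OF c m] by simp
qed

definition starts :: "(nat \<Rightarrow> nat) \<Rightarrow> nat \<Rightarrow> nat list \<Rightarrow> bool" where
  "starts k P v \<longleftrightarrow> (\<forall>s<length v. rho k (P + s) = v ! s)"

lemma lv0_starts: "lv k 0 u \<Longrightarrow> \<exists>P. starts k P u"
proof -
  assume "lv k 0 u"
  then obtain N p s where e: "comp_subst k N [3] = p @ u @ s" by (auto simp: lv_def)
  have "starts k (length p) u" unfolding starts_def
  proof (intro allI impI)
    fix t assume t: "t < length u"
    have "rho k (length p + t) = comp_subst k N [3] ! (length p + t)"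
      by (rule rho_eq) (use t in \<open>simp add: e\<close>)
    then show "rho k (length p + t) = u ! t" by (simp add: e nth_append t)
  qed
  then show ?thesis by blast
qed

lemma starts_append: "starts k P (u @ v) \<Longrightarrow> starts k P u \<and> starts k (P + length u) v"
  unfolding starts_def
proof (intro conjI allI impI)
  fix s assume a: "\<forall>s<length (u @ v). rho k (P + s) = (u @ v) ! s"
  { assume "s < length u" then show "rho k (P + s) = u ! s" using a[rule_format, of s] by (simp add: nth_append) }
  { assume "s < length v" then show "rho k (P + length u + s) = v ! s"
      using a[rule_format, of "length u + s"] by (simp add: nth_append add.assoc) }
qed

lemma starts_rep: "starts k P (concat (replicate K u) @ w) \<Longrightarrow> i \<le> K \<Longrightarrow>
   starts k (P + i * length u) (concat (replicate (K - i) u) @ w)"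
proof (induction i)
  case (Suc i)
  then have h: "starts k (P + i * length u) (concat (replicate (K - i) u) @ w)" by simp
  obtain K' where K': "K - i = Suc K'" using Suc.prems by (intro that[of "K - Suc i"]) simp
  have "K - Suc i = K'" using K' by simp
  have "starts k (P + i * length u + length u) (concat (replicate K' u) @ w)"
    using h K' starts_append[of k "P + i * length u" u "concat (replicate K' u) @ w"] by simp
  moreover have "P + i * length u + length u = P + Suc i * length u" by simp
  ultimately show ?case using \<open>K - Suc i = K'\<close> by simp
qed simp

lemma starts_agree: "starts k P v \<Longrightarrow> starts k Q v \<Longrightarrow> s < length v \<Longrightarrow> rho k (P + s) = rho k (Q + s)"
  unfolding starts_def by auto

lemma double_subst_hd: "a \<in> {1,2,3} \<Longrightarrow> \<exists>r. subst_word K1 (subst_word K2 (a # w)) = 3 # r"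
  by auto

lemma comp_prefix2: assumes "a \<in> {1,2,3}"
  shows "\<exists>r. comp_subst k (Suc (Suc m)) (a # w) = comp_subst k m [3] @ r"
proof -
  obtain r where r: "subst_word (k (Suc m)) (subst_word (k (Suc (Suc m))) (a # w)) = 3 # r"
    using double_subst_hd[OF assms] by blast
  have "comp_subst k (Suc (Suc m)) (a # w) = comp_subst k m (subst_word (k (Suc m)) (subst_word (k (Suc (Suc m))) (a # w)))"
    by simp
  also have "\<dots> = comp_subst k m [3] @ comp_subst k m r" unfolding r by (rule comp_subst_Cons)
  finally show ?thesis by blast
qed

lemma lv_pick: "lv k m (p @ a # v) \<Longrightarrow> v \<noteq> [] \<Longrightarrow> \<exists>z. lv k m [a, z]"
proof -
  assume "lv k m (p @ a # v)" "v \<noteq> []"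
  then obtain z s where "v = z # s" by (cases v) auto
  then have "lv k m (p @ [a, z] @ s)" using \<open>lv k m (p @ a # v)\<close> by simp
  then show ?thesis using lv_sub by blast
qed

lemma lv_three: assumes "\<forall>n. \<exists>p>n. k p \<ge> 2" shows "\<exists>y. lv k m [3, y]"
proof -
  obtain p where p: "p > m" "k p \<ge> 2" using assms by blast
  define N where "N = p - m - 1"
  define k' where "k' = (\<lambda>i. k (i + m))"
  have kp: "k' (Suc N) = k p" unfolding k'_def N_def using p by simp
  obtain r where r: "comp_subst k' N [3] = 3 # r" using comp_subst_hd3[of k' N "[]"] by blast
  have "comp_subst k' (Suc N) [3] = comp_subst k' N [3] @ comp_subst k' N (replicate (k p - 1) 1)"
    using comp3_Suc[of k' N] kp by simp
  also have "\<dots> = [] @ 3 # (r @ comp_subst k' N (replicate (k p - 1) 1))" using r by simp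
  finally have e: "comp_subst k' (Suc N) [3] = [] @ 3 # (r @ comp_subst k' N (replicate (k p - 1) 1))" .
  have "length (comp_subst k' N (replicate (k p - 1) 1)) \<ge> length (replicate (k p - 1) (1::nat))"
    by (rule comp_subst_len) auto
  then have ne: "r @ comp_subst k' N (replicate (k p - 1) 1) \<noteq> []" using p by auto
  have "lv k m ([] @ 3 # (r @ comp_subst k' N (replicate (k p - 1) 1)))"
    unfolding lv_def k'_def[symmetric]
    by (rule exI[of _ "Suc N"], rule exI[of _ "[]"], rule exI[of _ "[]"]) (use e in simp)
  from lv_pick[OF this ne] show ?thesis .
qed

lemma lv_one_from_three: assumes "k (Suc m) \<ge> 2" "lv k (Suc m) [3, y]" shows "\<exists>z. lv k m [1, z]"
proof -
  have y: "y \<in> {1,2,3}" using lv_set[OF assms(2)] by simp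
  have d: "lv k m (subst_word (k (Suc m)) [3, y])" by (rule lv_down[OF assms(2)])
  obtain K where K: "k (Suc m) - 1 = Suc K" using assms(1) by (intro that[of "k (Suc m) - 2"]) simp
  have "subst_word (k (Suc m)) [3, y] = [3] @ 1 # (replicate K 1 @ chi (k (Suc m)) y)"
    using K by simp
  then have d2: "lv k m ([3] @ 1 # (replicate K 1 @ chi (k (Suc m)) y))" using d by simp
  have "replicate K 1 @ chi (k (Suc m)) y \<noteq> []" using chi_ne[OF y] by simp
  from lv_pick[OF d2 this] show ?thesis .
qed

lemma lv_two_from_one: assumes "lv k (Suc m) [1, y]" shows "\<exists>z. lv k m [2, z]"
proof -
  have y: "y \<in> {1,2,3}" using lv_set[OF assms(1)] by simp
  have d: "lv k m (subst_word (k (Suc m)) [1, y])" by (rule lv_down[OF assms(1)])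
  have "subst_word (k (Suc m)) [1, y] = [] @ 2 # chi (k (Suc m)) y" by simp
  then have d2: "lv k m ([] @ 2 # chi (k (Suc m)) y)" using d by simp
  have "chi (k (Suc m)) y \<noteq> []" using chi_ne[OF y] by simp
  from lv_pick[OF d2 this] show ?thesis .
qed

lemma lv_one_from_two: assumes "k (Suc m) \<ge> 1" "lv k (Suc m) [2, y]" shows "\<exists>z. lv k m [1, z]"
proof -
  have y: "y \<in> {1,2,3}" using lv_set[OF assms(2)] by simp
  have d: "lv k m (subst_word (k (Suc m)) [2, y])" by (rule lv_down[OF assms(2)])
  obtain K where K: "k (Suc m) = Suc K" using assms(1) by (cases "k (Suc m)") auto
  have "subst_word (k (Suc m)) [2, y] = [3] @ 1 # (replicate K 1 @ chi (k (Suc m)) y)"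
    using K by simp
  then have d2: "lv k m ([3] @ 1 # (replicate K 1 @ chi (k (Suc m)) y))" using d by simp
  have "replicate K 1 @ chi (k (Suc m)) y \<noteq> []" using chi_ne[OF y] by simp
  from lv_pick[OF d2 this] show ?thesis .
qed


lemma orbit_eq: "(shift ^^ n) x = (\<lambda>i. x (i + n))"
  by (induction n) (auto simp: shift_def)

lemma cyl_open: "open {y::nat\<Rightarrow>nat. \<forall>i<L. y i = x i}"
proof -
  have "open {f::nat\<Rightarrow>nat. \<forall>i\<in>{..<L}. f ((\<lambda>i. i) i) \<in> (\<lambda>i. {x i}) i}"
    by (rule product_topology_basis') (auto intro: open_discrete)
  moreover have "{f::nat\<Rightarrow>nat. \<forall>i\<in>{..<L}. f ((\<lambda>i. i) i) \<in> (\<lambda>i. {x i}) i} = {y. \<forall>i<L. y i = x i}"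
    by auto
  ultimately show ?thesis by simp
qed

lemma open_contains_cyl:
  assumes "open (A :: (nat \<Rightarrow> nat) set)" "x \<in> A"
  shows "\<exists>L. {y. \<forall>i<L. y i = x i} \<subseteq> A"
proof -
  have "openin (product_topology (\<lambda>i. euclidean) UNIV) A" using assms(1) by (simp add: open_fun_def)
  from product_topology_open_contains_basis[OF this assms(2)]
  obtain Xs where Xs: "x \<in> (\<Pi>\<^sub>E i\<in>UNIV. Xs i)" "finite {i. Xs i \<noteq> topspace euclidean}"
     "(\<Pi>\<^sub>E i\<in>UNIV. Xs i) \<subseteq> A" by (elim exE conjE) (rule that)
  have xX: "x i \<in> Xs i" for i using PiE_mem[OF Xs(1) UNIV_I] .
  define J where "J = {i. Xs i \<noteq> UNIV}"
  have fJ: "finite J" using Xs(2) by (simp add: J_def)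
  define L where "L = Suc (Max (insert 0 J))"
  have "{y. \<forall>i<L. y i = x i} \<subseteq> (\<Pi>\<^sub>E i\<in>UNIV. Xs i)"
  proof
    fix y assume y: "y \<in> {y. \<forall>i<L. y i = x i}"
    have "y i \<in> Xs i" for i
    proof (cases "i \<in> J")
      case True
      then have "i \<le> Max (insert 0 J)" using fJ by simp
      then have "i < L" by (simp add: L_def)
      then have "y i = x i" using y by simp
      then show ?thesis using xX[of i] by simp
    next
      case False then show ?thesis by (simp add: J_def)
    qed
    then show "y \<in> (\<Pi>\<^sub>E i\<in>UNIV. Xs i)" by (simp add: PiE_UNIV_domain)
  qed
  then show ?thesis using Xs(3) by (intro exI[of _ L]) (rule subset_trans)
qed

lemma unif_cyl:
  fixes f :: "(nat \<Rightarrow> nat) \<Rightarrow> 'b::metric_space"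
  assumes "compact X" "continuous_on X f" "e > 0"
  shows "\<exists>L. \<forall>x\<in>X. \<forall>y\<in>X. (\<forall>i<L. x i = y i) \<longrightarrow> dist (f x) (f y) < e"
proof -
  have "\<forall>x\<in>X. \<exists>L. \<forall>y\<in>X. (\<forall>i<L. y i = x i) \<longrightarrow> dist (f y) (f x) < e / 2"
  proof
    fix x assume x: "x \<in> X"
    have "open (ball (f x) (e/2))" "f x \<in> ball (f x) (e/2)" using assms(3) by auto
    then obtain A where A: "open A" "x \<in> A" "\<forall>y\<in>X. y \<in> A \<longrightarrow> f y \<in> ball (f x) (e/2)"
    proof -
      have "\<forall>B. open B \<longrightarrow> f x \<in> B \<longrightarrow> (\<exists>A. open A \<and> x \<in> A \<and> (\<forall>y\<in>X. y \<in> A \<longrightarrow> f y \<in> B))"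
        using assms(2) x unfolding continuous_on_topological by blast
      then show ?thesis using \<open>open (ball (f x) (e/2))\<close> \<open>f x \<in> ball (f x) (e/2)\<close> that by blast
    qed
    obtain L where L: "{y. \<forall>i<L. y i = x i} \<subseteq> A" using open_contains_cyl[OF A(1,2)] by blast
    show "\<exists>L. \<forall>y\<in>X. (\<forall>i<L. y i = x i) \<longrightarrow> dist (f y) (f x) < e / 2"
      using A(3) L by (intro exI[of _ L]) (auto simp: dist_commute)
  qed
  from bchoice[OF this] obtain Lf where Lf: "\<forall>x\<in>X. \<forall>y\<in>X. (\<forall>i<Lf x. y i = x i) \<longrightarrow> dist (f y) (f x) < e / 2"
    by blast
  have "X \<subseteq> (\<Union>x\<in>X. {y. \<forall>i<Lf x. y i = x i})" by auto
  obtain C where C: "C \<subseteq> X" "finite C" "X \<subseteq> (\<Union>x\<in>C. {y. \<forall>i<Lf x. y i = x i})"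
    by (rule compactE_image[OF assms(1) cyl_open \<open>X \<subseteq> _\<close>])
  define L where "L = Max (insert 0 (Lf ` C))"
  have "\<forall>x\<in>X. \<forall>y\<in>X. (\<forall>i<L. x i = y i) \<longrightarrow> dist (f x) (f y) < e"
  proof (intro ballI impI)
    fix x y assume xy: "x \<in> X" "y \<in> X" "\<forall>i<L. x i = y i"
    obtain c where c: "c \<in> C" "\<forall>i<Lf c. x i = c i" using C(3) xy(1) by blast
    have "Lf c \<le> L" unfolding L_def using C(2) c(1) by simp
    then have yc: "\<forall>i<Lf c. y i = c i" using c(2) xy(3) by auto
    have "dist (f x) (f c) < e/2" using Lf C(1) c xy(1) by blast
    moreover have "dist (f y) (f c) < e/2" using Lf C(1) c(1) yc xy(2) by blast
    ultimately show "dist (f x) (f y) < e" using dist_triangle_half_l[of "f x" "f c" e "f y"] by (simp add: dist_commute)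
  qed
  then show ?thesis by blast
qed

lemma X_compact:
  assumes rr: "\<forall>n. \<exists>p>n. k p \<ge> 2"
  shows "compact (subshiftX k)"
proof -
  define K where "K = (\<Pi>\<^sub>E i\<in>(UNIV::nat set). ({1,2,3}::nat set))"
  have "compactin (product_topology (\<lambda>i. euclidean) UNIV) K"
    unfolding K_def compactin_PiE by (intro disjI2 ballI) (simp add: finite_imp_compact)
  then have cK: "compact K" by (simp add: euclidean_product_topology)
  have Kc: "K = (\<Inter>i. {x::nat\<Rightarrow>nat. x i \<in> {1,2,3}})" unfolding K_def PiE_UNIV_domain Pi_def by blast
  have cli: "closed {x::nat\<Rightarrow>nat. x i \<in> {1,2,3}}" for i
  proof -
    have cl: "closed ({1,2,3}::nat set)" unfolding closed_def by (rule open_discrete)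
    have co: "continuous_on UNIV (\<lambda>x::nat\<Rightarrow>nat. x i)" by simp
    have "closed ((\<lambda>x::nat\<Rightarrow>nat. x i) -` {1,2,3} \<inter> UNIV)"
      using continuous_on_closed_vimage[OF closed_UNIV, THEN iffD1, OF co, rule_format, OF cl] .
    moreover have "(\<lambda>x::nat\<Rightarrow>nat. x i) -` {1,2,3} \<inter> UNIV = {x::nat\<Rightarrow>nat. x i \<in> {1,2,3}}" by blast
    ultimately show ?thesis by simp
  qed
  have clK: "closed K" unfolding Kc by (intro closed_INT ballI cli)
  have "(\<lambda>i. rho k (i + n)) \<in> K" for n
    unfolding K_def PiE_UNIV_domain Pi_def using rho_range[OF rr] by blast
  then have "range (\<lambda>n. (shift ^^ n) (rho k)) \<subseteq> K"
    unfolding orbit_eq by blast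
  then have "subshiftX k \<subseteq> K" unfolding subshiftX_def using clK by (rule closure_minimal)
  then have "subshiftX k = K \<inter> subshiftX k" by blast
  moreover have "compact (K \<inter> subshiftX k)"
    using cK by (rule compact_Int_closed) (simp add: subshiftX_def)
  ultimately show ?thesis by simp
qed

lemma cos_round:
  fixes x d :: real
  assumes d: "0 < d" "d \<le> 1/2" and c: "1 - cos (2*pi*x) < 1 - cos (2*pi*d)"
  shows "\<bar>x - round x\<bar> < d"
proof (rule ccontr)
  assume "\<not> ?thesis"
  then have t: "d \<le> \<bar>x - round x\<bar>" by simp
  have t2: "\<bar>x - round x\<bar> \<le> 1/2" using of_int_round_abs_le[of x] by (simp add: abs_minus_commute)
  have "cos (2*pi*x) = cos (2*pi*(x - round x) + 2 * pi * of_int (round x))" by (simp add: algebra_simps)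
  also have "\<dots> = cos (2*pi*(x - round x))"
    by (simp add: cos_add) 
  also have "\<dots> = cos (2*pi*\<bar>x - round x\<bar>)"
  proof -
    have "2*pi*\<bar>x - round x\<bar> = \<bar>2*pi*(x - round x)\<bar>" by (simp add: abs_mult)
    then show ?thesis by (simp only: cos_abs_real)
  qed
  also have "\<dots> \<le> cos (2*pi*d)"
    by (rule cos_monotone_0_pi_le) (use d t t2 in \<open>auto intro: mult_left_mono\<close>)
  finally show False using c by linarith
qed


lemma vA:
  fixes x :: "real^3"
  shows "(x v* Amat k)$1 = x$2" "(x v* Amat k)$2 = real k * x$1 + x$3"
        "(x v* Amat k)$3 = (real k - 1) * x$1 + x$3"
  by (simp_all add: vector_matrix_mult_def Amat_def sum_3)

lemma vA_neg: fixes x :: "real^3" shows "(- x) v* A = - (x v* A)"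
  by (simp add: vec_eq_iff vector_matrix_mult_def sum_negf)

lemma prodA_Suc_v: "x v* prodA k (Suc n) = (x v* prodA k n) v* Amat (k (Suc n))"
  by (simp add: vector_matrix_mul_assoc)

lemma Qminus_iff: "x \<in> Qminus \<longleftrightarrow> x$1 \<ge> 0 \<and> x$2 \<ge> 0 \<and> x$3 \<le> 0"
  by (simp add: Qminus_def)

lemma back_Q:
  fixes y :: "nat \<Rightarrow> real^3"
  assumes kp: "\<And>n. \<kappa> n \<ge> (1::nat)" and rec: "\<And>n. y (Suc n) = y n v* Amat (\<kappa> n)"
  shows "y (Suc n) \<in> Qminus \<Longrightarrow> y n \<in> Qminus"
proof -
  assume a: "y (Suc n) \<in> Qminus"
  have k1: "real (\<kappa> n) - 1 \<ge> 0" using kp[of n] by simp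
  have e1: "y (Suc n) $ 1 = y n $ 2" and e2: "y (Suc n) $ 2 = real (\<kappa> n) * y n $ 1 + y n $ 3"
    and e3: "y (Suc n) $ 3 = (real (\<kappa> n) - 1) * y n $ 1 + y n $ 3"
    using vA[of "y n" "\<kappa> n"] rec[of n] by simp_all
  have "y n $ 1 = y (Suc n) $ 2 - y (Suc n) $ 3" using e2 e3 by (simp add: algebra_simps)
  then have p1: "y n $ 1 \<ge> 0" using a by (simp add: Qminus_iff)
  have "y n $ 3 = y (Suc n) $ 3 - (real (\<kappa> n) - 1) * y n $ 1" using e3 by simp
  moreover have "(real (\<kappa> n) - 1) * y n $ 1 \<ge> 0" using k1 p1 by simp
  ultimately have p3: "y n $ 3 \<le> 0" using a by (simp add: Qminus_iff)
  show ?thesis using p1 p3 a e1 by (simp add: Qminus_iff)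
qed

lemma back_Q_le:
  fixes y :: "nat \<Rightarrow> real^3"
  assumes kp: "\<And>n. \<kappa> n \<ge> (1::nat)" and rec: "\<And>n. y (Suc n) = y n v* Amat (\<kappa> n)"
  shows "y (m + d) \<in> Qminus \<Longrightarrow> y m \<in> Qminus"
proof (induction d arbitrary: m)
  case (Suc d)
  then have "y (Suc m + d) \<in> Qminus" by simp
  then have "y (Suc m) \<in> Qminus" using Suc.IH by blast
  then show ?case using back_Q[where \<kappa>=\<kappa> and y=y, OF kp rec] by blast
qed simp

lemma pos_zero:
  fixes y :: "nat \<Rightarrow> real^3"
  assumes kp: "\<And>n. \<kappa> n \<ge> (1::nat)" and rec: "\<And>n. y (Suc n) = y n v* Amat (\<kappa> n)"
    and lim: "y \<longlonglongrightarrow> 0"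
    and p: "y n $ 1 \<ge> 0" "y n $ 2 \<ge> 0" "y n $ 3 \<ge> 0"
  shows "y n $ 1 = 0 \<and> y n $ 2 = 0 \<and> y n $ 3 = 0"
proof -
  define S where "S m = y m $ 1 + y m $ 2 + y m $ 3" for m
  have step: "y (n + m) $ 1 \<ge> 0 \<and> y (n + m) $ 2 \<ge> 0 \<and> y (n + m) $ 3 \<ge> 0 \<and> S (n + m) \<ge> S n" for m
  proof (induction m)
    case 0 then show ?case using p by simp
  next
    case (Suc m)
    let ?j = "n + m"
    have k1: "real (\<kappa> ?j) - 1 \<ge> 0" using kp[of ?j] by simp
    have e1: "y (Suc ?j) $ 1 = y ?j $ 2" and e2: "y (Suc ?j) $ 2 = real (\<kappa> ?j) * y ?j $ 1 + y ?j $ 3"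
      and e3: "y (Suc ?j) $ 3 = (real (\<kappa> ?j) - 1) * y ?j $ 1 + y ?j $ 3"
      using vA[of "y ?j" "\<kappa> ?j"] rec[of ?j] by simp_all
    have m1: "(real (\<kappa> ?j) - 1) * y ?j $ 1 \<ge> 0" using k1 Suc by simp
    have m2: "real (\<kappa> ?j) * y ?j $ 1 = (real (\<kappa> ?j) - 1) * y ?j $ 1 + y ?j $ 1" by (simp add: algebra_simps)
    have IH: "y ?j $ 1 \<ge> 0" "y ?j $ 2 \<ge> 0" "y ?j $ 3 \<ge> 0" "S ?j \<ge> S n" using Suc.IH by auto
    have "y (Suc ?j) $ 1 \<ge> 0" "y (Suc ?j) $ 2 \<ge> 0" "y (Suc ?j) $ 3 \<ge> 0"
      using IH e1 e2 e3 m1 m2 by linarith+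
    moreover have "S (Suc ?j) \<ge> S n" using IH e1 e2 e3 m1 m2 unfolding S_def by linarith
    ultimately show ?case by simp
  qed
  have li: "(\<lambda>n. y n $ i) \<longlonglongrightarrow> 0" for i using tendsto_vec_nth[OF lim, of i] by simp
  have "(S \<longlongrightarrow> 0 + 0 + 0) sequentially"
    unfolding S_def by (intro tendsto_add li)
  then have lS: "S \<longlonglongrightarrow> 0" by simp
  have "S n \<le> 0"
  proof (rule LIMSEQ_le_const[OF lS], intro exI allI impI)
    fix m assume "n \<le> m"
    then obtain d where "m = n + d" using le_Suc_ex by blast
    then show "S n \<le> S m" using step[of d] by simp
  qed
  then show ?thesis using p unfolding S_def by linarith
qed

lemma alt_contra:
  fixes y :: "nat \<Rightarrow> real^3"
  assumes kp: "\<And>n. \<kappa> n \<ge> (1::nat)" and rec: "\<And>n. y (Suc n) = y n v* Amat (\<kappa> n)"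
    and lim: "y \<longlonglongrightarrow> 0"
    and alt: "\<forall>n\<ge>N. y n $ 1 * y n $ 2 < 0"
  shows False
proof -
  define T where "T m = \<bar>y m $ 1\<bar> + \<bar>y m $ 2\<bar>" for m
  have T2: "T (Suc (Suc n)) \<ge> T n" if n: "n \<ge> N" for n
  proof -
    define p where "p = y n $ 1"
    define q where "q = y n $ 2"
    define r where "r = y n $ 3"
    define u where "u = real (\<kappa> n) * p + r"
    define v where "v = real (\<kappa> (Suc n)) * q + ((real (\<kappa> n) - 1) * p + r)"
    have e1: "y (Suc n) $ 1 = q" and e2: "y (Suc n) $ 2 = u"
      and e3: "y (Suc n) $ 3 = (real (\<kappa> n) - 1) * p + r"
      using vA[of "y n" "\<kappa> n"] rec[of n] by (simp_all add: p_def q_def r_def u_def)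
    have f1: "y (Suc (Suc n)) $ 1 = u" and f2: "y (Suc (Suc n)) $ 2 = v"
      using vA[of "y (Suc n)" "\<kappa> (Suc n)"] rec[of "Suc n"] e1 e2 e3 by (simp_all add: v_def)
    have c0: "p * q < 0" using alt n by (simp add: p_def q_def)
    have c1: "q * u < 0" using alt n e1 e2 by (metis le_SucI)
    have c2: "u * v < 0" using alt n f1 f2 by (metis le_SucI)
    have vu: "v = u - p + real (\<kappa> (Suc n)) * q" by (simp add: v_def u_def algebra_simps)
    have k1: "real (\<kappa> (Suc n)) \<ge> 1" using kp[of "Suc n"] by simp
    have "\<bar>u\<bar> + \<bar>v\<bar> \<ge> \<bar>p\<bar> + \<bar>q\<bar>"
    proof (cases "p > 0")
      case True
      then have "q < 0" using c0 by (simp add: mult_less_0_iff)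
      then have "u > 0" using c1 by (simp add: mult_less_0_iff)
      then have "v < 0" using c2 by (simp add: mult_less_0_iff)
      have "real (\<kappa> (Suc n)) * q \<le> 1 * q" using k1 \<open>q < 0\<close> by (intro mult_right_mono_neg) auto
      then show ?thesis using True \<open>q < 0\<close> \<open>u > 0\<close> \<open>v < 0\<close> vu by simp
    next
      case False
      then have "p < 0" using c0 by (cases "p = 0") auto
      then have "q > 0" using c0 by (simp add: mult_less_0_iff)
      then have "u < 0" using c1 by (simp add: mult_less_0_iff)
      then have "v > 0" using c2 by (simp add: mult_less_0_iff)
      have "real (\<kappa> (Suc n)) * q \<ge> 1 * q" using k1 \<open>q > 0\<close> by (intro mult_right_mono) auto
      then show ?thesis using \<open>p < 0\<close> \<open>q > 0\<close> \<open>u < 0\<close> \<open>v > 0\<close> vu by simp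
    qed
    then show ?thesis unfolding T_def using f1 f2 by (simp add: p_def q_def)
  qed
  have Tj: "T (N + 2 * j) \<ge> T N" for j
  proof (induction j)
    case (Suc j)
    have "T (Suc (Suc (N + 2 * j))) \<ge> T (N + 2 * j)" by (rule T2) simp
    then show ?case using Suc by simp
  qed simp
  have TN: "T N > 0" using alt unfolding T_def by (cases "y N $ 1 = 0") auto
  have li: "(\<lambda>n. y n $ i) \<longlonglongrightarrow> 0" for i using tendsto_vec_nth[OF lim, of i] by simp
  have "(T \<longlongrightarrow> \<bar>0\<bar> + \<bar>0\<bar>) sequentially"
    unfolding T_def by (intro tendsto_add tendsto_rabs li)
  then have "T \<longlonglongrightarrow> 0" by simp
  then obtain M where M: "\<forall>n\<ge>M. dist (T n) 0 < T N" using TN unfolding lim_sequentially by blast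
  have "dist (T (N + 2 * M)) 0 < T N" using M by simp
  moreover have "T (N + 2 * M) \<ge> 0" unfolding T_def by simp
  ultimately show False using Tj[of M] by simp
qed

lemma LA:
  fixes y :: "nat \<Rightarrow> real^3"
  assumes kp: "\<And>n. \<kappa> n \<ge> (1::nat)" and rec: "\<And>n. y (Suc n) = y n v* Amat (\<kappa> n)"
    and lim: "y \<longlonglongrightarrow> 0"
  shows "(\<forall>n. y n \<in> Qminus) \<or> (\<forall>n. - y n \<in> Qminus)"
proof -
  define z where "z n = - y n" for n
  have recz: "z (Suc n) = z n v* Amat (\<kappa> n)" for n unfolding z_def by (simp add: rec vA_neg)
  have limz: "z \<longlonglongrightarrow> 0" unfolding z_def using tendsto_minus[OF lim] by simp
  have QQ: "y n \<in> Qminus \<or> z n \<in> Qminus" if "y n $ 1 * y n $ 2 \<ge> 0" for n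
  proof (cases "y n $ 1 \<ge> 0 \<and> y n $ 2 \<ge> 0")
    case True
    show ?thesis
    proof (cases "y n $ 3 \<le> 0")
      case False
      then have "y n $ 3 = 0" using pos_zero[where \<kappa>=\<kappa> and y=y, OF kp rec lim, of n] True by simp
      then show ?thesis using False by simp
    qed (use True in \<open>simp add: Qminus_iff\<close>)
  next
    case False
    then have neg: "y n $ 1 \<le> 0" "y n $ 2 \<le> 0" using that
      by (auto simp: zero_le_mult_iff)
    show ?thesis
    proof (cases "y n $ 3 \<ge> 0")
      case False
      then have "z n $ 3 = 0" using pos_zero[where \<kappa>=\<kappa> and y=z, OF kp recz limz, of n] neg by (simp add: z_def)
      then show ?thesis using False by (simp add: z_def)
    qed (use neg in \<open>simp add: Qminus_iff z_def\<close>)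
  qed
  have inf: "\<exists>n\<ge>N. y n $ 1 * y n $ 2 \<ge> 0" for N
    using alt_contra[where \<kappa>=\<kappa> and y=y, OF kp rec lim, of N] by (meson not_le)
  show ?thesis
  proof (cases "\<forall>N. \<exists>n\<ge>N. y n \<in> Qminus")
    case True
    have "y m \<in> Qminus" for m
    proof -
      obtain n where n: "n \<ge> m" "y n \<in> Qminus" using True by blast
      then obtain d where "n = m + d" using le_Suc_ex by blast
      then show ?thesis using back_Q_le[where \<kappa>=\<kappa> and y=y, OF kp rec] n(2) by blast
    qed
    then show ?thesis by blast
  next
    case False
    then obtain N where N: "\<forall>n\<ge>N. y n \<notin> Qminus" by blast
    have "z m \<in> Qminus" for m
    proof -
      obtain n where n: "n \<ge> max m N" "y n $ 1 * y n $ 2 \<ge> 0" using inf by blast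
      then have "z n \<in> Qminus" using QQ[OF n(2)] N by auto
      moreover obtain d where "n = m + d" using n(1) le_Suc_ex by (metis max.bounded_iff)
      ultimately show ?thesis using back_Q_le[where \<kappa>=\<kappa> and y=z, OF kp recz] by blast
    qed
    then show ?thesis unfolding z_def by blast
  qed
qed


lemma near:
  fixes \<xi> \<delta> :: real
  assumes rr: "\<forall>n. \<exists>p>n. k p \<ge> 2"
    and cont: "continuous_on (subshiftX k) f"
    and nz: "\<exists>x\<in>subshiftX k. f x \<noteq> (0::complex)"
    and eq: "\<forall>x\<in>subshiftX k. f (shift x) = cis (2*pi*\<xi>) * f x"
    and d: "0 < \<delta>" "\<delta> \<le> 1/2"
  shows "\<exists>L. \<forall>P h. (\<forall>s<L. rho k (P + s) = rho k (P + h + s)) \<longrightarrow> \<bar>\<xi> * real h - round (\<xi> * real h)\<bar> < \<delta>"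
proof -
  define c where "c = cis (2*pi*\<xi>)"
  define orb where "orb P = (shift ^^ P) (rho k)" for P
  have orbX: "orb P \<in> subshiftX k" for P
    unfolding orb_def subshiftX_def by (rule subsetD[OF closure_subset]) blast
  have orbi: "orb P i = rho k (i + P)" for P i unfolding orb_def orbit_eq by simp
  have fo: "f (orb P) = c ^ P * f (orb 0)" for P
  proof (induction P)
    case (Suc P)
    have "orb (Suc P) = shift (orb P)" unfolding orb_def by simp
    then have "f (orb (Suc P)) = c * f (orb P)" using eq orbX unfolding c_def by simp
    then show ?case using Suc by simp
  qed simp
  have f0: "f (orb 0) \<noteq> 0"
  proof
    assume a: "f (orb 0) = 0"
    have "\<And>x. x \<in> range orb \<Longrightarrow> f x = 0" using fo a by auto
    moreover have "continuous_on (closure (range orb)) f" using cont unfolding subshiftX_def orb_def by simp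
    ultimately have "\<forall>x\<in>closure (range orb). f x = 0"
      using continuous_constant_on_closure by blast
    then show False using nz unfolding subshiftX_def orb_def by auto
  qed
  have cd: "cos (2*pi*\<delta>) < 1"
    using cos_monotone_0_pi[of 0 "2*pi*\<delta>"] d by (simp add: field_simps)
  define \<epsilon> where "\<epsilon> = (1 - cos (2*pi*\<delta>)) * norm (f (orb 0))"
  have ep: "\<epsilon> > 0" unfolding \<epsilon>_def using cd f0 by simp
  obtain L where L: "\<forall>x\<in>subshiftX k. \<forall>y\<in>subshiftX k. (\<forall>i<L. x i = y i) \<longrightarrow> dist (f x) (f y) < \<epsilon>"
    using unif_cyl[OF X_compact[OF rr] cont ep] by blast
  have "\<bar>\<xi> * real h - round (\<xi> * real h)\<bar> < \<delta>" if ag: "\<forall>s<L. rho k (P + s) = rho k (P + h + s)" for P h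
  proof -
    have "\<forall>i<L. orb P i = orb (P + h) i" using ag unfolding orbi by (simp add: add.commute)
    then have "dist (f (orb P)) (f (orb (P + h))) < \<epsilon>" using L orbX by blast
    moreover have eqn: "f (orb (P + h)) - f (orb P) = c ^ P * ((c ^ h - 1) * f (orb 0))"
    proof -
      have a1: "f (orb (P + h)) = c ^ (P + h) * f (orb 0)" by (rule fo)
      have a2: "f (orb P) = c ^ P * f (orb 0)" by (rule fo)
      show ?thesis unfolding a1 a2 by (simp add: power_add right_diff_distrib left_diff_distrib mult.assoc)
    qed
    moreover have nc: "norm c = 1" unfolding c_def by simp
    moreover have "dist (f (orb P)) (f (orb (P + h))) = norm (c ^ h - 1) * norm (f (orb 0))"
    proof -
      have "dist (f (orb P)) (f (orb (P + h))) = norm (f (orb (P + h)) - f (orb P))"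
        by (simp add: dist_norm norm_minus_commute)
      also have "\<dots> = norm (c ^ P) * (norm (c ^ h - 1) * norm (f (orb 0)))"
        unfolding eqn norm_mult by simp
      also have "norm (c ^ P) = 1" unfolding norm_power nc by simp
      finally show ?thesis by simp
    qed
    ultimately have "norm (c ^ h - 1) * norm (f (orb 0)) < \<epsilon>" by simp
    then have n1: "norm (c ^ h - 1) < 1 - cos (2*pi*\<delta>)" unfolding \<epsilon>_def using f0 by simp
    have "c ^ h - 1 = cis (real h * (2*pi*\<xi>)) - 1" unfolding c_def by (simp add: Complex.DeMoivre)
    then have "Re (c ^ h - 1) = cos (2*pi*(\<xi> * real h)) - 1" by (simp add: mult_ac)
    then have "1 - cos (2*pi*(\<xi> * real h)) \<le> norm (c ^ h - 1)" using abs_Re_le_cmod[of "c ^ h - 1"] by simp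
    with n1 have "1 - cos (2*pi*(\<xi> * real h)) < 1 - cos (2*pi*\<delta>)" by simp
    then show ?thesis by (rule cos_round[OF d])
  qed
  then show ?thesis by blast
qed

lemma mult_round:
  fixes x \<delta> :: real
  assumes d: "\<delta> \<le> 1/4" and a: "\<forall>i\<le>K. \<bar>real i * x - round (real i * x)\<bar> < \<delta>" and K: "K \<ge> 1"
  shows "\<forall>i\<le>K. \<bar>real i * (x - round x)\<bar> < \<delta>"
proof -
  have e1: "\<bar>x - round x\<bar> < \<delta>" using a K by force
  have "i \<le> K \<longrightarrow> \<bar>real i * (x - round x)\<bar> < \<delta>" for i
  proof (induction i)
    case 0 then show ?case using e1 by simp
  next
    case (Suc i)
    show ?case
    proof
      assume i: "Suc i \<le> K"
      then have ih: "\<bar>real i * (x - round x)\<bar> < \<delta>" using Suc by simp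
      define m where "m = round (real (Suc i) * x) - int (Suc i) * round x"
      have eq: "real (Suc i) * x - round (real (Suc i) * x) = real (Suc i) * (x - round x) - of_int m"
        unfolding m_def by (simp add: algebra_simps)
      have h1: "\<bar>real (Suc i) * x - round (real (Suc i) * x)\<bar> < \<delta>" using a i by blast
      have "real (Suc i) * (x - round x) = real i * (x - round x) + (x - round x)" by (simp add: algebra_simps)
      then have h2: "\<bar>real (Suc i) * (x - round x)\<bar> < 2 * \<delta>" using ih e1 by linarith
      have "\<bar>real_of_int m\<bar> < 1" using h1 h2 d unfolding eq by linarith
      then have "m = 0" by linarith
      then show "\<bar>real (Suc i) * (x - round x)\<bar> < \<delta>" using h1 unfolding eq by simp
    qed
  qed
  then show ?thesis by blast
qed


declare prodA.simps(2)[simp del]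

lemma starts_pref: "starts k P (v @ w) \<Longrightarrow> starts k P v"
  using starts_append by blast

lemma agree_letter:
  assumes lv: "lv k (Suc (Suc m)) [j, y]" and j: "j \<in> {1,2,3}" and L: "L \<le> length (comp_subst k m [3])"
  shows "\<exists>P. \<forall>s<L. rho k (P + s) = rho k (P + length (comp_subst k (Suc (Suc m)) [j]) + s)"
proof -
  let ?n = "Suc (Suc m)"
  have y: "y \<in> {1,2,3}" using lv_set[OF lv] by simp
  obtain P where P: "starts k P (comp_subst k ?n [j, y])" using lv0_starts[OF lv_top[OF lv]] by blast
  have "comp_subst k ?n [j, y] = comp_subst k ?n [j] @ comp_subst k ?n [y]" by (rule comp_subst_Cons)
  then have P0: "starts k P (comp_subst k ?n [j] @ comp_subst k ?n [y])" using P by simp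
  note PP = starts_append[OF P0]
  have P1: "starts k P (comp_subst k ?n [j])" using PP by (rule conjunct1)
  have P2: "starts k (P + length (comp_subst k ?n [j])) (comp_subst k ?n [y])" using PP by (rule conjunct2)
  obtain r1 where r1: "comp_subst k ?n [j] = comp_subst k m [3] @ r1" using comp_prefix2[OF j, of k m "[]"] by blast
  obtain r2 where r2: "comp_subst k ?n [y] = comp_subst k m [3] @ r2" using comp_prefix2[OF y, of k m "[]"] by blast
  have Q1: "starts k P (comp_subst k m [3])" using P1 unfolding r1 by (rule starts_pref)
  have Q2: "starts k (P + length (comp_subst k ?n [j])) (comp_subst k m [3])" using P2 unfolding r2 by (rule starts_pref)
  show ?thesis
  proof (intro exI allI impI)
    fix s assume "s < L"
    then have "s < length (comp_subst k m [3])" using L by linarith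
    then show "rho k (P + s) = rho k (P + length (comp_subst k ?n [j]) + s)" using starts_agree[OF Q1 Q2] by blast
  qed
qed

lemma comp_expand: "comp_subst k n (3 # replicate K 1 @ c) =
   comp_subst k n [3] @ concat (replicate K (comp_subst k n [1])) @ comp_subst k n c"
proof -
  have "comp_subst k n (3 # replicate K 1 @ c) = comp_subst k n [3] @ comp_subst k n (replicate K 1 @ c)"
    by (rule comp_subst_Cons)
  also have "comp_subst k n (replicate K 1 @ c) = comp_subst k n (replicate K 1) @ comp_subst k n c"
    by (rule comp_subst_append)
  finally show ?thesis by (simp add: comp_subst_replicate)
qed

lemma agree_mult:
  assumes lv: "lv k (Suc (Suc (Suc m))) [2, y]" and L: "L \<le> length (comp_subst k m [3])"
    and i: "i \<le> k (Suc (Suc (Suc m)))"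
  shows "\<exists>P. \<forall>s<L. rho k (P + s) = rho k (P + i * length (comp_subst k (Suc (Suc m)) [1]) + s)"
proof -
  let ?n = "Suc (Suc m)"
  let ?K = "k (Suc ?n)"
  let ?c = "chi ?K y"
  have y: "y \<in> {1,2,3}" using lv_set[OF lv] by simp
  have "lv k ?n (subst_word ?K [2, y])" by (rule lv_down[OF lv])
  then have "lv k ?n (3 # replicate ?K 1 @ ?c)" by simp
  from lv0_starts[OF lv_top[OF this]] obtain P where
    P: "starts k P (comp_subst k ?n [3] @ concat (replicate ?K (comp_subst k ?n [1])) @ comp_subst k ?n ?c)"
    unfolding comp_expand by blast
  define P' where "P' = P + length (comp_subst k ?n [3])"
  have P': "starts k P' (concat (replicate ?K (comp_subst k ?n [1])) @ comp_subst k ?n ?c)"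
    using starts_append[OF P] unfolding P'_def by blast
  have cne: "?c \<noteq> []" using chi_ne[OF y] by simp
  then obtain c0 c' where cc: "?c = c0 # c'" by (cases ?c) auto
  have c0: "c0 \<in> {1,2,3}" using chi_set[of ?K y] cc by auto
  have ST: "starts k (P' + i' * length (comp_subst k ?n [1])) (comp_subst k m [3])" if i': "i' \<le> ?K" for i'
  proof -
    have S: "starts k (P' + i' * length (comp_subst k ?n [1]))
       (concat (replicate (?K - i') (comp_subst k ?n [1])) @ comp_subst k ?n ?c)"
      by (rule starts_rep[OF P' i'])
    show ?thesis
    proof (cases "?K - i'")
      case 0
      obtain r where r: "comp_subst k ?n (c0 # c') = comp_subst k m [3] @ r" using comp_prefix2[OF c0] by blast
      show ?thesis using S unfolding 0 replicate_0 concat.simps(1) append_Nil cc r by (rule starts_pref)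
    next
      case (Suc q)
      obtain r where r: "comp_subst k ?n [1] = comp_subst k m [3] @ r" using comp_prefix2[of 1 k m "[]"] by auto
      show ?thesis using S unfolding Suc replicate_Suc concat.simps(2) r append.assoc by (rule starts_pref)
    qed
  qed
  have A: "starts k P' (comp_subst k m [3])" using ST[of 0] by simp
  have B: "starts k (P' + i * length (comp_subst k ?n [1])) (comp_subst k m [3])" using ST[OF i] .
  show ?thesis
  proof (intro exI allI impI)
    fix s assume "s < L"
    then have "s < length (comp_subst k m [3])" using L by linarith
    then show "rho k (P' + s) = rho k (P' + i * length (comp_subst k ?n [1]) + s)" using starts_agree[OF A B] by blast
  qed
qed

lemma scaleR_vm: fixes x :: "real^'n" shows "(a *\<^sub>R x) v* A = a *\<^sub>R (x v* A)"
  by (simp add: vec_eq_iff vector_matrix_mult_def sum_distrib_left mult_ac)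

lemma diff_vm: fixes x :: "real^'n" shows "(x - y) v* A = x v* A - y v* A"
  by (simp add: vec_eq_iff vector_matrix_mult_def sum_subtractf algebra_simps)

lemma len_rec:
  "length (comp_subst k (Suc n) [1]) = length (comp_subst k n [2])"
  "length (comp_subst k (Suc n) [2]) = length (comp_subst k n [3]) + k (Suc n) * length (comp_subst k n [1])"
  "length (comp_subst k (Suc n) [3]) = length (comp_subst k n [3]) + (k (Suc n) - 1) * length (comp_subst k n [1])"
proof -
  show "length (comp_subst k (Suc n) [1]) = length (comp_subst k n [2])" by simp
  have "comp_subst k (Suc n) [2] = comp_subst k n (3 # replicate (k (Suc n)) 1 @ [])" by simp
  then show "length (comp_subst k (Suc n) [2]) = length (comp_subst k n [3]) + k (Suc n) * length (comp_subst k n [1])"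
    unfolding comp_expand by (simp add: length_concat sum_list_replicate)
  have "comp_subst k (Suc n) [3] = comp_subst k n (3 # replicate (k (Suc n) - 1) 1 @ [])" by simp
  then show "length (comp_subst k (Suc n) [3]) = length (comp_subst k n [3]) + (k (Suc n) - 1) * length (comp_subst k n [1])"
    unfolding comp_expand by (simp add: length_concat sum_list_replicate)
qed

lemma Lv:
  assumes pos: "\<forall>i\<ge>1. k i \<ge> 1"
  shows "vector [1,1,1] v* prodA k n = (vector [real (length (comp_subst k n [1])),
     real (length (comp_subst k n [2])), real (length (comp_subst k n [3]))] :: real^3)"
proof (induction n)
  case 0 then show ?case by simp
next
  case (Suc n)
  have K: "k (Suc n) \<ge> 1" using pos by simp
  then have K': "real (k (Suc n) - 1) = real (k (Suc n)) - 1" by (simp add: of_nat_diff)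
  have l1: "real (length (comp_subst k (Suc n) [1])) = real (length (comp_subst k n [2]))"
    by (simp only: len_rec)
  have l2: "real (length (comp_subst k (Suc n) [2])) = real (length (comp_subst k n [3])) + real (k (Suc n)) * real (length (comp_subst k n [1]))"
    by (simp only: len_rec of_nat_add of_nat_mult)
  have l3: "real (length (comp_subst k (Suc n) [3])) = real (length (comp_subst k n [3])) + (real (k (Suc n)) - 1) * real (length (comp_subst k n [1]))"
    by (simp only: len_rec of_nat_add of_nat_mult K')
  show ?case unfolding prodA_Suc_v Suc.IH
    apply (simp only: vec_eq_iff forall_3 vA vector_3 l1 l2 l3)
    apply (simp add: algebra_simps)
    done
qed

lemma surj_A: fixes y :: "real^3" shows "\<exists>x. x v* Amat K = y"
proof -
  define x where "x = (vector [y$2 - y$3, y$1, y$3 - (real K - 1) * (y$2 - y$3)] :: real^3)"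
  have "x v* Amat K = y" by (simp add: vec_eq_iff forall_3 vA x_def algebra_simps)
  then show ?thesis by blast
qed

lemma surj_prodA: fixes y :: "real^3" shows "\<exists>x. x v* prodA k n = y"
proof (induction n arbitrary: y)
  case 0 then show ?case by (intro exI[of _ y]) simp
next
  case (Suc n)
  obtain y' where y': "y' v* Amat (k (Suc n)) = y" using surj_A by blast
  obtain x where "x v* prodA k n = y'" using Suc by blast
  then show ?case using y' by (intro exI[of _ x]) (simp add: prodA_Suc_v)
qed

lemma int_back_A: fixes x :: "real^3"
  assumes "\<forall>j. (x v* Amat K) $ j \<in> \<int>" shows "\<forall>j. x $ j \<in> \<int>"
proof -
  have a: "(x v* Amat K) $ 1 \<in> \<int>" "(x v* Amat K) $ 2 \<in> \<int>" "(x v* Amat K) $ 3 \<in> \<int>" using assms by auto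
  have x2: "x $ 2 \<in> \<int>" using a(1) by (simp add: vA)
  have "x $ 1 = (x v* Amat K) $ 2 - (x v* Amat K) $ 3" by (simp add: vA algebra_simps)
  then have x1: "x $ 1 \<in> \<int>" using a by simp
  have "x $ 3 = (x v* Amat K) $ 3 - (real K - 1) * x $ 1" by (simp add: vA)
  then have x3: "x $ 3 \<in> \<int>" using a x1 by (simp add: Ints_diff Ints_mult)
  show ?thesis using x1 x2 x3 by (simp add: forall_3)
qed

lemma int_back: fixes x :: "real^3"
  assumes "\<forall>j. (x v* prodA k n) $ j \<in> \<int>" shows "\<forall>j. x $ j \<in> \<int>"
  using assms
proof (induction n arbitrary: x)
  case 0 then show ?case by simp
next
  case (Suc n)
  have "\<forall>j. ((x v* prodA k n) v* Amat (k (Suc n))) $ j \<in> \<int>"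
    using Suc.prems unfolding prodA_Suc_v .
  then have "\<forall>j. (x v* prodA k n) $ j \<in> \<int>" by (rule int_back_A)
  then show ?case using Suc.IH by blast
qed


lemma int_small: "\<bar>real_of_int m\<bar> < 1 \<Longrightarrow> m = 0"
  by linarith

theorem theorem3p8:
  fixes k :: "nat \<Rightarrow> nat" and \<xi> :: real
  assumes pos: "\<forall>i\<ge>1. k i \<ge> 1"
    and even_inf: "infinite {i. i \<ge> 1 \<and> k (2 * i) > 1}"
    and odd_inf: "infinite {i. i \<ge> 1 \<and> k (2 * i - 1) > 1}"
    and xi: "0 < \<xi>" "\<xi> < 1"
    and notin: "\<not> (\<exists>w\<in>Ws k. \<exists>z::real^3. (\<forall>j. z $ j \<in> \<int>) \<and>
                      vector [\<xi>, \<xi>, \<xi>] = w + z)"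
  shows "\<not> continuous_eigenvalue (subshiftX k) shift (exp (2 * pi * \<i> * complex_of_real \<xi>))"
proof
  assume ce: "continuous_eigenvalue (subshiftX k) shift (exp (2 * pi * \<i> * complex_of_real \<xi>))"
  have cexp: "exp (2 * pi * \<i> * complex_of_real \<xi>) = cis (2*pi*\<xi>)"
    by (simp add: cis_conv_exp mult_ac)
  obtain f where cont: "continuous_on (subshiftX k) f" and nz: "\<exists>x\<in>subshiftX k. f x \<noteq> 0"
    and eq: "\<forall>x\<in>subshiftX k. f (shift x) = cis (2*pi*\<xi>) * f x"
    using ce unfolding continuous_eigenvalue_def cexp by blast
  have kpos: "k (Suc n) \<ge> 1" for n using pos by simp
  have rr: "\<forall>n. \<exists>p>n. k p \<ge> 2"
  proof
    fix n
    obtain i where i: "i > n" "i \<in> {i. i \<ge> 1 \<and> k (2 * i) > 1}"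
      using even_inf unfolding infinite_nat_iff_unbounded by blast
    then show "\<exists>p>n. k p \<ge> 2" by (intro exI[of _ "2 * i"]) auto
  qed
  have par: "\<exists>j. k (Suc (m + 2 * j)) \<ge> 2" for m
  proof (cases "even m")
    case True
    obtain i where i: "i > m" "i \<in> {i. i \<ge> 1 \<and> k (2 * i - 1) > 1}"
      using odd_inf unfolding infinite_nat_iff_unbounded by blast
    have "\<exists>j. Suc (m + 2 * j) = 2 * i - 1" using True i(1) by presburger
    then obtain j where "Suc (m + 2 * j) = 2 * i - 1" by blast
    then show ?thesis using i(2) by (intro exI[of _ j]) auto
  next
    case False
    obtain i where i: "i > m" "i \<in> {i. i \<ge> 1 \<and> k (2 * i) > 1}"
      using even_inf unfolding infinite_nat_iff_unbounded by blast
    have "\<exists>j. Suc (m + 2 * j) = 2 * i" using False i(1) by presburger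
    then obtain j where "Suc (m + 2 * j) = 2 * i" by blast
    then show ?thesis using i(2) by (intro exI[of _ j]) auto
  qed
  have three: "\<exists>y. lv k m [3, y]" for m using lv_three[OF rr] .
  have desc: "(\<exists>y. lv k (m + 2 * j) [1, y]) \<longrightarrow> (\<exists>y. lv k m [1, y])" for j m
  proof (induction j arbitrary: m)
    case (Suc j)
    show ?case
    proof
      assume "\<exists>y. lv k (m + 2 * Suc j) [1, y]"
      then have "\<exists>y. lv k (Suc (Suc m) + 2 * j) [1, y]" by (simp add: algebra_simps)
      then obtain y where "lv k (Suc (Suc m)) [1, y]" using Suc.IH by blast
      then obtain z where "lv k (Suc m) [2, z]" using lv_two_from_one by blast
      then show "\<exists>y. lv k m [1, y]" using lv_one_from_two kpos by blast
    qed
  qed simp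
  have one: "\<exists>y. lv k m [1, y]" for m
  proof -
    obtain j where j: "k (Suc (m + 2 * j)) \<ge> 2" using par by blast
    obtain y where "lv k (Suc (m + 2 * j)) [3, y]" using three by blast
    then have "\<exists>z. lv k (m + 2 * j) [1, z]" using lv_one_from_three j by blast
    then show ?thesis using desc by blast
  qed
  have two: "\<exists>y. lv k m [2, y]" for m using one[of "Suc m"] lv_two_from_one by blast
  define len where "len n a = real (length (comp_subst k n [a]))" for n a
  have B: "\<exists>N. \<forall>n\<ge>N. \<bar>\<xi> * len n 2 - round (\<xi> * len n 2)\<bar> < \<delta> \<and> \<bar>\<xi> * len n 3 - round (\<xi> * len n 3)\<bar> < \<delta>
      \<and> (\<forall>i\<le>k (Suc n). \<bar>real i * (\<xi> * len n 1) - round (real i * (\<xi> * len n 1))\<bar> < \<delta>)"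
    if d: "0 < \<delta>" "\<delta> \<le> 1/2" for \<delta>
  proof -
    obtain L where L: "\<forall>P h. (\<forall>s<L. rho k (P + s) = rho k (P + h + s)) \<longrightarrow> \<bar>\<xi> * real h - round (\<xi> * real h)\<bar> < \<delta>"
      using near[OF rr cont nz eq d] by blast
    obtain n1 where n1: "length (comp_subst k n1 [3]) \<ge> L" using len3_unbounded[OF rr] by blast
    have "\<forall>n\<ge>n1 + 2. \<bar>\<xi> * len n 2 - round (\<xi> * len n 2)\<bar> < \<delta> \<and> \<bar>\<xi> * len n 3 - round (\<xi> * len n 3)\<bar> < \<delta>
      \<and> (\<forall>i\<le>k (Suc n). \<bar>real i * (\<xi> * len n 1) - round (real i * (\<xi> * len n 1))\<bar> < \<delta>)"
    proof (intro allI impI conjI)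
      fix n assume n: "n \<ge> n1 + 2"
      then obtain m where m: "n = Suc (Suc m)" "m \<ge> n1" by (metis add_2_eq_Suc' le_Suc_ex add.commute add_Suc_right le_add1)
      have Lm: "L \<le> length (comp_subst k m [3])" using n1 len3_mono[OF m(2), of k] by linarith
      show "\<bar>\<xi> * len n 2 - round (\<xi> * len n 2)\<bar> < \<delta>"
      proof -
        obtain y where "lv k (Suc (Suc m)) [2, y]" using two by blast
        from agree_letter[OF this _ Lm] obtain P where
          "\<forall>s<L. rho k (P + s) = rho k (P + length (comp_subst k (Suc (Suc m)) [2]) + s)" by auto
        then show ?thesis using L unfolding len_def m(1) by blast
      qed
      show "\<bar>\<xi> * len n 3 - round (\<xi> * len n 3)\<bar> < \<delta>"
      proof -
        obtain y where "lv k (Suc (Suc m)) [3, y]" using three by blast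
        from agree_letter[OF this _ Lm] obtain P where
          "\<forall>s<L. rho k (P + s) = rho k (P + length (comp_subst k (Suc (Suc m)) [3]) + s)" by auto
        then show ?thesis using L unfolding len_def m(1) by blast
      qed
      show "\<bar>real i * (\<xi> * len n 1) - round (real i * (\<xi> * len n 1))\<bar> < \<delta>" if i: "i \<le> k (Suc n)" for i
      proof -
        obtain y where "lv k (Suc (Suc (Suc m))) [2, y]" using two by blast
        from agree_mult[OF this Lm] i obtain P where
          "\<forall>s<L. rho k (P + s) = rho k (P + i * length (comp_subst k (Suc (Suc m)) [1]) + s)"
          unfolding m(1) by blast
        then have "\<bar>\<xi> * real (i * length (comp_subst k (Suc (Suc m)) [1])) - round (\<xi> * real (i * length (comp_subst k (Suc (Suc m)) [1])))\<bar> < \<delta>"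
          using L by blast
        moreover have eqx: "\<xi> * real (i * length (comp_subst k (Suc (Suc m)) [1])) = real i * (\<xi> * len n 1)"
          unfolding len_def m(1) of_nat_mult by (simp only: mult_ac)
        ultimately show "\<bar>real i * (\<xi> * len n 1) - round (real i * (\<xi> * len n 1))\<bar> < \<delta>" by (simp only: eqx)
      qed
    qed
    then show ?thesis by blast
  qed
  define u where "u n = vector [\<xi>, \<xi>, \<xi>] v* prodA k n" for n
  have vxi: "(vector [\<xi>, \<xi>, \<xi>] :: real^3) = \<xi> *\<^sub>R vector [1, 1, 1]" by (simp add: vec_eq_iff forall_3)
  have ucomp: "u n $ 1 = \<xi> * len n 1" "u n $ 2 = \<xi> * len n 2" "u n $ 3 = \<xi> * len n 3" for n
    unfolding u_def vxi scaleR_vm Lv[OF pos] len_def by simp_all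
  have urec: "u (Suc n) = u n v* Amat (k (Suc n))" for n unfolding u_def by (rule prodA_Suc_v)
  define e :: "nat \<Rightarrow> real^3" where "e n = (\<chi> j. u n $ j - of_int (round (u n $ j)))" for n
  have ecomp: "e n $ j = u n $ j - of_int (round (u n $ j))" for n j unfolding e_def by simp
  have ebound: "\<exists>N. \<forall>n\<ge>N. \<bar>e n $ 1\<bar> < \<delta> \<and> \<bar>e n $ 2\<bar> < \<delta> \<and> \<bar>e n $ 3\<bar> < \<delta> \<and> real (k (Suc n)) * \<bar>e n $ 1\<bar> < \<delta>"
    if d: "0 < \<delta>" "\<delta> \<le> 1/8" for \<delta>
  proof -
    obtain N where N: "\<forall>n\<ge>N. \<bar>\<xi> * len n 2 - round (\<xi> * len n 2)\<bar> < \<delta> \<and> \<bar>\<xi> * len n 3 - round (\<xi> * len n 3)\<bar> < \<delta>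
      \<and> (\<forall>i\<le>k (Suc n). \<bar>real i * (\<xi> * len n 1) - round (real i * (\<xi> * len n 1))\<bar> < \<delta>)"
      using B[of \<delta>] d by auto
    have "\<bar>e n $ 1\<bar> < \<delta> \<and> \<bar>e n $ 2\<bar> < \<delta> \<and> \<bar>e n $ 3\<bar> < \<delta> \<and> real (k (Suc n)) * \<bar>e n $ 1\<bar> < \<delta>" if n: "n \<ge> N" for n
    proof -
      have m: "\<forall>i\<le>k (Suc n). \<bar>real i * (\<xi> * len n 1 - round (\<xi> * len n 1))\<bar> < \<delta>"
        by (rule mult_round) (use N n d kpos in auto)
      have "\<bar>real 1 * (\<xi> * len n 1 - round (\<xi> * len n 1))\<bar> < \<delta>" using m kpos[of n] by blast
      moreover have "\<bar>real (k (Suc n)) * (\<xi> * len n 1 - round (\<xi> * len n 1))\<bar> < \<delta>" using m by blast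
      ultimately show ?thesis using N n unfolding ecomp ucomp by (simp add: abs_mult)
    qed
    then show ?thesis by blast
  qed
  obtain N0 where N0: "\<forall>n\<ge>N0. \<bar>e n $ 1\<bar> < 1/8 \<and> \<bar>e n $ 2\<bar> < 1/8 \<and> \<bar>e n $ 3\<bar> < 1/8 \<and> real (k (Suc n)) * \<bar>e n $ 1\<bar> < 1/8"
    using ebound[of "1/8"] by auto
  have erec: "e (Suc n) = e n v* Amat (k (Suc n))" if n: "n \<ge> N0" for n
  proof -
    define K where "K = k (Suc n)"
    define a1 where "a1 = u n $ 1"
    define a2 where "a2 = u n $ 2"
    define a3 where "a3 = u n $ 3"
    define b1 where "b1 = u (Suc n) $ 1"
    define b2 where "b2 = u (Suc n) $ 2"
    define b3 where "b3 = u (Suc n) $ 3"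
    have b1e: "b1 = a2" and b2e: "b2 = real K * a1 + a3" and b3e: "b3 = (real K - 1) * a1 + a3"
      unfolding a1_def a2_def a3_def b1_def b2_def b3_def K_def urec by (simp_all add: vA)
    have A: "\<bar>a1 - round a1\<bar> < 1/8" "\<bar>a2 - round a2\<bar> < 1/8" "\<bar>a3 - round a3\<bar> < 1/8"
      "real K * \<bar>a1 - round a1\<bar> < 1/8"
      using N0 n unfolding ecomp a1_def a2_def a3_def K_def by auto
    have Bb: "\<bar>b1 - round b1\<bar> < 1/8" "\<bar>b2 - round b2\<bar> < 1/8" "\<bar>b3 - round b3\<bar> < 1/8"
      using N0 n unfolding ecomp b1_def b2_def b3_def by (auto dest: spec[of _ "Suc n"])
    have K1: "real K \<ge> 1" using kpos[of n] unfolding K_def by simp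
    have KA: "\<bar>real K * (a1 - round a1)\<bar> < 1/8" using A(4) K1 by (simp add: abs_mult)
    have r1: "round b1 = round a2"
    proof -
      have "real_of_int (round b1 - round a2) = (a2 - round a2) - (b1 - round b1)" using b1e by simp
      then have "\<bar>real_of_int (round b1 - round a2)\<bar> < 1" using A(2) Bb(1) by linarith
      then show ?thesis using int_small by fastforce
    qed
    have r2: "round b2 = int K * round a1 + round a3"
    proof -
      have "real_of_int (round b2 - (int K * round a1 + round a3)) =
          real K * (a1 - round a1) + (a3 - round a3) - (b2 - round b2)" using b2e by (simp add: algebra_simps)
      then have "\<bar>real_of_int (round b2 - (int K * round a1 + round a3))\<bar> < 1" using KA A(3) Bb(2) by linarith
      then show ?thesis using int_small by fastforce
    qed
    have r3: "round b3 = (int K - 1) * round a1 + round a3"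
    proof -
      have "real_of_int (round b3 - ((int K - 1) * round a1 + round a3)) =
          real K * (a1 - round a1) - (a1 - round a1) + (a3 - round a3) - (b3 - round b3)" using b3e by (simp add: algebra_simps)
      then have "\<bar>real_of_int (round b3 - ((int K - 1) * round a1 + round a3))\<bar> < 1" using KA A(1) A(3) Bb(3) by linarith
      then show ?thesis using int_small by fastforce
    qed
    have E1: "e (Suc n) $ 1 = b1 - of_int (round b1)" "e (Suc n) $ 2 = b2 - of_int (round b2)"
      "e (Suc n) $ 3 = b3 - of_int (round b3)" unfolding ecomp b1_def b2_def b3_def by simp_all
    have E0: "e n $ 1 = a1 - of_int (round a1)" "e n $ 2 = a2 - of_int (round a2)"
      "e n $ 3 = a3 - of_int (round a3)" unfolding ecomp a1_def a2_def a3_def by simp_all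
    have o2: "real_of_int (round b2) = real K * of_int (round a1) + of_int (round a3)" using r2 by simp
    have o3: "real_of_int (round b3) = (real K - 1) * of_int (round a1) + of_int (round a3)" using r3 by simp
    have c1: "e (Suc n) $ 1 = e n $ 2" unfolding E1 E0 using b1e r1 by simp
    have c2: "e (Suc n) $ 2 = real K * e n $ 1 + e n $ 3" unfolding E1 E0 o2 using b2e by (simp add: algebra_simps)
    have c3: "e (Suc n) $ 3 = (real K - 1) * e n $ 1 + e n $ 3" unfolding E1 E0 o3 using b3e by (simp add: algebra_simps)
    show ?thesis unfolding vec_eq_iff forall_3 vA using c1 c2 c3 unfolding K_def by simp
  qed
  have elim: "e \<longlonglongrightarrow> 0"
    unfolding lim_sequentially
  proof (intro allI impI)
    fix r :: real assume r: "r > 0"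
    define dd where "dd = min (r/4) (1/8)"
    have dpos: "0 < dd" "dd \<le> 1/8" "dd \<le> r/4" using r by (auto simp: dd_def)
    obtain N where N: "\<forall>n\<ge>N. \<bar>e n $ 1\<bar> < dd \<and> \<bar>e n $ 2\<bar> < dd \<and> \<bar>e n $ 3\<bar> < dd \<and> real (k (Suc n)) * \<bar>e n $ 1\<bar> < dd"
      using ebound[OF dpos(1,2)] by blast
    have "dist (e n) 0 < r" if "n \<ge> N" for n
    proof -
      have "norm (e n) \<le> \<bar>e n $ 1\<bar> + \<bar>e n $ 2\<bar> + \<bar>e n $ 3\<bar>" using norm_le_l1_cart[of "e n"] by (simp add: sum_3)
      moreover have "\<bar>e n $ 1\<bar> < dd" "\<bar>e n $ 2\<bar> < dd" "\<bar>e n $ 3\<bar> < dd" using N that by auto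
      ultimately have "norm (e n) < r" using dpos by linarith
      then show ?thesis by (simp add: dist_norm)
    qed
    then show "\<exists>N. \<forall>n\<ge>N. dist (e n) 0 < r" by blast
  qed
  obtain w where w: "w v* prodA k N0 = e N0" using surj_prodA by blast
  define W where "W n = w v* prodA k n" for n
  have Wrec: "W (Suc n) = W n v* Amat (k (Suc n))" for n unfolding W_def by (rule prodA_Suc_v)
  have WE: "W n = e n" if "n \<ge> N0" for n
    using that
  proof (induction n rule: dec_induct)
    case base then show ?case using w by (simp add: W_def)
  next
    case (step n) then show ?case using Wrec erec by simp
  qed
  have Wlim: "W \<longlonglongrightarrow> 0"
  proof -
    have "eventually (\<lambda>n. e n = W n) sequentially" unfolding eventually_sequentially using WE by (intro exI[of _ N0]) (simp add: eq_commute)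
    then show ?thesis using elim tendsto_cong by blast
  qed
  have LAr: "(\<forall>n. W n \<in> Qminus) \<or> (\<forall>n. - W n \<in> Qminus)"
    by (rule LA[where \<kappa>="\<lambda>n. k (Suc n)"]) (use kpos Wrec Wlim in auto)
  have wWs: "w \<in> Ws k"
  proof (cases "\<forall>n. W n \<in> Qminus")
    case True
    then have "w \<in> (\<Inter>n\<in>{1..}. {x. x v* prodA k n \<in> Qminus})" unfolding W_def by blast
    then show ?thesis unfolding Ws_def by (rule span_base)
  next
    case False
    then have "\<forall>n. - W n \<in> Qminus" using LAr by blast
    then have "- w \<in> (\<Inter>n\<in>{1..}. {x. x v* prodA k n \<in> Qminus})" unfolding W_def by (simp add: vA_neg)
    then have "- w \<in> Ws k" unfolding Ws_def by (rule span_base)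
    then show ?thesis unfolding Ws_def using span_neg by fastforce
  qed
  define z where "z = vector [\<xi>, \<xi>, \<xi>] - w"
  have "z v* prodA k N0 = u N0 - e N0" unfolding z_def diff_vm u_def w by simp
  then have "\<forall>j. (z v* prodA k N0) $ j \<in> \<int>" by (simp add: ecomp)
  then have zint: "\<forall>j. z $ j \<in> \<int>" by (rule int_back)
  have "vector [\<xi>, \<xi>, \<xi>] = w + z" unfolding z_def by simp
  then show False using notin wWs zint by blast
qed


end
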